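(* Let $\mathbb{K}$ be a field of characteristic zero, let $t\in\mathbb{K}\setminus\{0,1\}$, and let $\mathfrak{g}$ be a finite-dimensional non-perfect Lie algebra over $\mathbb{K}$ (i.e. $\mathfrak{g}^{(2)}\neq\mathfrak{g}$). Then there is an injective linear map from $\mathcal{D}(t,1,0)(\mathfrak{g})$ into the centroid $\mathcal{C}(\mathfrak{g})=\mathcal{D}(1,1,0)(\mathfrak{g})$ of $\mathfrak{g}$.
   Context: For a Lie algebra $\mathfrak{g}=(V,\mu)$, the derived algebra $\mathfrak{g}^{(2)}$ is the linear span of all products $\mu(X,Y)$. For $t\in\mathbb{K}$, $\mathcal{D}(t,1,0)(\mathfrak{g})$ denotes the space of linear maps $D:V\to V$ with $tD\mu(X,Y)=\mu(DX,Y)$ for all $X,Y\in V$; in particular the centroid is $\mathcal{D}(1,1,0)(\mathfrak{g})=\{D: D\mu(X,Y)=\mu(DX,Y)\ \forall X,Y\}$. *)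

theory Defs
  imports Complex_Main
begin

definition lie_algebra :: "('k::field \<Rightarrow> 'v::ab_group_add \<Rightarrow> 'v) \<Rightarrow> ('v \<Rightarrow> 'v \<Rightarrow> 'v) \<Rightarrow> bool" where
  "lie_algebra s mu \<longleftrightarrow> vector_space s
     \<and> (\<forall>x. Vector_Spaces.linear s s (mu x)) \<and> (\<forall>y. Vector_Spaces.linear s s (\<lambda>x. mu x y))
     \<and> (\<forall>x. mu x x = 0)
     \<and> (\<forall>x y z. mu x (mu y z) + mu y (mu z x) + mu z (mu x y) = 0)"

definition fin_dim :: "('k::field \<Rightarrow> 'v::ab_group_add \<Rightarrow> 'v) \<Rightarrow> bool" where
  "fin_dim s \<longleftrightarrow> (\<exists>B. finite_dimensional_vector_space s B)"

definition derived_algebra :: "('k::field \<Rightarrow> 'v::ab_group_add \<Rightarrow> 'v) \<Rightarrow> ('v \<Rightarrow> 'v \<Rightarrow> 'v) \<Rightarrow> 'v set" where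
  "derived_algebra s mu = module.span s {mu x y | x y. True}"

definition Dt10 :: "('k::field \<Rightarrow> 'v::ab_group_add \<Rightarrow> 'v) \<Rightarrow> ('v \<Rightarrow> 'v \<Rightarrow> 'v) \<Rightarrow> 'k \<Rightarrow> ('v \<Rightarrow> 'v) set" where
  "Dt10 s mu t = {D. Vector_Spaces.linear s s D \<and> (\<forall>X Y. s t (D (mu X Y)) = mu (D X) Y)}"

definition centroid :: "('k::field \<Rightarrow> 'v::ab_group_add \<Rightarrow> 'v) \<Rightarrow> ('v \<Rightarrow> 'v \<Rightarrow> 'v) \<Rightarrow> ('v \<Rightarrow> 'v) set" where
  "centroid s mu = Dt10 s mu 1"

definition linear_on_maps :: "('k::field \<Rightarrow> 'v::ab_group_add \<Rightarrow> 'v) \<Rightarrow> ('v \<Rightarrow> 'v) set \<Rightarrow> (('v \<Rightarrow> 'v) \<Rightarrow> ('v \<Rightarrow> 'v)) \<Rightarrow> bool" where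
  "linear_on_maps s A phi \<longleftrightarrow>
     (\<forall>D1\<in>A. \<forall>D2\<in>A. phi (\<lambda>x. D1 x + D2 x) = (\<lambda>x. phi D1 x + phi D2 x))
   \<and> (\<forall>a. \<forall>D\<in>A. phi (\<lambda>x. s a (D x)) = (\<lambda>x. s a (phi D x)))"

end

theory Submission
  imports Defs
begin

lemma lin_add: "Vector_Spaces.linear s s f \<Longrightarrow> f (x + y) = f x + f y"
  by (simp add: Vector_Spaces.linear_iff)

lemma lin_scale: "Vector_Spaces.linear s s f \<Longrightarrow> f (s c x) = s c (f x)"
  by (simp add: Vector_Spaces.linear_iff)

lemma lin_diff:
  fixes f :: "'v::ab_group_add \<Rightarrow> 'v"
  shows "Vector_Spaces.linear s s f \<Longrightarrow> f (x - y) = f x - f y"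
  using lin_add[of s f "x - y" y] by (simp add: algebra_simps)

lemma lin_neg:
  fixes f :: "'v::ab_group_add \<Rightarrow> 'v"
  shows "Vector_Spaces.linear s s f \<Longrightarrow> f (- x) = - f x"
  using lin_diff[of s f 0 x] lin_diff[of s f 0 0] by simp

lemma lin_zero:
  fixes f :: "'v::ab_group_add \<Rightarrow> 'v"
  shows "Vector_Spaces.linear s s f \<Longrightarrow> f 0 = 0"
  using lin_diff[of s f 0 0] by simp

lemma lie_anti:
  assumes L: "lie_algebra s mu"
  shows "mu x y = - mu y x"
proof -
  have l1: "Vector_Spaces.linear s s (mu a)" for a using L by (simp add: lie_algebra_def)
  have l2: "Vector_Spaces.linear s s (\<lambda>z. mu z b)" for b using L by (simp add: lie_algebra_def)
  have a0: "mu z z = 0" for z using L by (simp add: lie_algebra_def)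
  have "0 = mu (x + y) (x + y)" using a0 by simp
  also have "\<dots> = mu x (x + y) + mu y (x + y)" using lin_add[OF l2] by simp
  also have "\<dots> = mu x y + mu y x" using lin_add[OF l1] a0 by simp
  finally show ?thesis by (simp add: eq_neg_iff_add_eq_0)
qed

lemma key_B:
  assumes L: "lie_algebra s mu" and D: "D \<in> Dt10 s mu t"
  shows "mu x (D y) = s t (D (mu x y))"
proof -
  interpret V: vector_space s using L by (simp add: lie_algebra_def)
  have lD: "Vector_Spaces.linear s s D" and eD: "\<And>X Y. s t (D (mu X Y)) = mu (D X) Y"
    using D by (auto simp: Dt10_def)
  have "mu x (D y) = - mu (D y) x" by (rule lie_anti[OF L])
  also have "\<dots> = - s t (D (mu y x))" using eD by simp
  also have "\<dots> = s t (D (mu x y))" using lie_anti[OF L, of y x] lin_neg[OF lD] by simp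
  finally show ?thesis .
qed

lemma key1:
  assumes L: "lie_algebra s mu" and D: "D \<in> Dt10 s mu t"
    and t0: "t \<noteq> 0" and t1: "t \<noteq> 1"
  shows "D (mu x (mu y z)) = 0"
proof -
  interpret V: vector_space s using L by (simp add: lie_algebra_def)
  have lD: "Vector_Spaces.linear s s D" and eD: "\<And>X Y. s t (D (mu X Y)) = mu (D X) Y"
    using D by (auto simp: Dt10_def)
  have l1: "Vector_Spaces.linear s s (mu a)" for a using L by (simp add: lie_algebra_def)
  have jac: "mu x (mu y z) + mu y (mu z x) + mu z (mu x y) = 0" for x y z
    using L by (simp add: lie_algebra_def)
  define a where "a = mu x (mu y z)"
  define b where "b = mu y (mu z x)"
  define c where "c = mu z (mu x y)"
  have e1: "mu (D x) (mu y z) = s t (D a)" using eD a_def by simp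
  have e2: "mu y (mu z (D x)) = s (t*t) (D b)"
    using key_B[OF L D, of z x] key_B[OF L D, of y "mu z x"] lin_scale[OF l1] b_def by simp
  have e3: "mu z (mu (D x) y) = s (t*t) (D c)"
    using eD[of x y, symmetric] key_B[OF L D, of z "mu x y"] lin_scale[OF l1] c_def by simp
  have "s t (D a) + s (t*t) (D b) + s (t*t) (D c) = 0"
    using jac[of "D x" y z] e1 e2 e3 by simp
  moreover have "D b + D c = - D a"
  proof -
    have "b + c = - a" using jac[of x y z] a_def b_def c_def
      by (simp add: add.assoc eq_neg_iff_add_eq_0 add.commute add.left_commute)
    then show ?thesis using lin_add[OF lD, of b c] lin_neg[OF lD, of a] by simp
  qed
  ultimately have "s t (D a) - s (t*t) (D a) = 0"
    by (metis V.scale_right_distrib add.assoc V.scale_minus_right diff_conv_add_uminus)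
  then have "s (t - t*t) (D a) = 0" by (simp add: V.scale_left_diff_distrib)
  moreover have "t - t*t \<noteq> 0"
  proof
    assume "t - t*t = 0"
    then have "t * (1 - t) = 0" by (simp add: algebra_simps)
    then show False using t0 t1 by simp
  qed
  ultimately show ?thesis using a_def by simp
qed

lemma key3:
  assumes L: "lie_algebra s mu" and D: "D \<in> Dt10 s mu t"
    and t0: "t \<noteq> 0" and t1: "t \<noteq> 1"
    and u: "u \<in> derived_algebra s mu"
  shows "mu (D u) y = 0"
proof -
  interpret V: vector_space s using L by (simp add: lie_algebra_def)
  have lD: "Vector_Spaces.linear s s D" and eD: "\<And>X Y. s t (D (mu X Y)) = mu (D X) Y"
    using D by (auto simp: Dt10_def)
  have l2: "Vector_Spaces.linear s s (\<lambda>z. mu z b)" for b using L by (simp add: lie_algebra_def)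
  have lc: "Vector_Spaces.linear s s (\<lambda>z. mu (D z) y)"
    using Vector_Spaces.linear_compose[OF lD l2[of y]] by (simp add: o_def)
  have u': "u \<in> V.span {mu x y | x y. True}" using u by (simp add: derived_algebra_def)
  show ?thesis using u'
  proof (induction rule: V.span_induct)
    case base
    show ?case unfolding V.subspace_def
      using lin_add[OF lc] lin_scale[OF lc] lin_zero[OF lc] by simp
  next
    case (step w)
    then obtain a b where w: "w = mu a b" by auto
    have "mu (D w) y = s t (D (mu w y))" using eD by simp
    also have "\<dots> = s t (D (- mu y (mu a b)))" using lie_anti[OF L, of w y] w by simp
    also have "\<dots> = 0" using lin_neg[OF lD] key1[OF L D t0 t1] by simp
    finally show ?case .
  qed
qed

theorem theorem3p6:
  fixes s :: "'k::field_char_0 \<Rightarrow> 'v::ab_group_add \<Rightarrow> 'v"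
    and mu :: "'v \<Rightarrow> 'v \<Rightarrow> 'v"
    and t :: 'k
  assumes "lie_algebra s mu"
    and "fin_dim s"
    and "derived_algebra s mu \<noteq> UNIV"
    and "t \<noteq> 0" and "t \<noteq> 1"
  shows "\<exists>phi. linear_on_maps s (Dt10 s mu t) phi
              \<and> inj_on phi (Dt10 s mu t)
              \<and> phi ` Dt10 s mu t \<subseteq> centroid s mu"
proof -
  note L = assms(1) and t0 = assms(4) and t1 = assms(5)
  interpret V: vector_space s using L by (simp add: lie_algebra_def)
  interpret P: vector_space_pair s s by unfold_locales
  define G where "G = derived_algebra s mu"
  have sG: "V.subspace G" by (simp add: G_def derived_algebra_def)
  obtain B0 where B0: "B0 \<subseteq> G" "V.independent B0" "G \<subseteq> V.span B0"
    by (rule V.maximal_independent_subset)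
  have spB0: "V.span B0 = G"
    using B0 sG by (metis V.span_subspace)
  define Q where "Q = P.construct B0 id"
  have lQ: "Vector_Spaces.linear s s Q" unfolding Q_def by (rule P.linear_construct[OF B0(2)])
  have lid: "Vector_Spaces.linear s s id" by (simp add: Vector_Spaces.linear_iff V.vector_space_axioms)
  have QG: "x \<in> G \<Longrightarrow> Q x = x" for x
    using P.linear_eq_on[OF lQ lid, of x B0] spB0 P.construct_basis[OF B0(2)] unfolding Q_def by auto
  have QinG: "Q x \<in> G" for x
    using P.construct_in_span[OF B0(2), of id x] spB0 unfolding Q_def by simp
  have brG: "mu x y \<in> G" for x y
    unfolding G_def derived_algebra_def by (rule V.span_base) auto
  define phi where "phi = (\<lambda>D x. s (inverse t) (D (x - Q x)) + D (Q x))"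
  have lin: "linear_on_maps s (Dt10 s mu t) phi"
    unfolding linear_on_maps_def phi_def
    by (auto simp: V.scale_right_distrib algebra_simps)
  have cent: "phi D \<in> centroid s mu" if D: "D \<in> Dt10 s mu t" for D
  proof -
    have lD: "Vector_Spaces.linear s s D" and eD: "\<And>X Y. s t (D (mu X Y)) = mu (D X) Y"
      using D by (auto simp: Dt10_def)
    have l2: "Vector_Spaces.linear s s (\<lambda>z. mu z b)" for b using L by (simp add: lie_algebra_def)
    have linphi: "Vector_Spaces.linear s s (phi D)"
      unfolding Vector_Spaces.linear_iff phi_def
    proof (intro conjI allI)
      show "vector_space s" by (rule V.vector_space_axioms)
      show "vector_space s" by (rule V.vector_space_axioms)
      fix x y
      have "x + y - Q (x + y) = (x - Q x) + (y - Q y)" using lin_add[OF lQ] by (simp add: algebra_simps)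
      then have h: "D (x + y - Q (x + y)) = D (x - Q x) + D (y - Q y)" using lin_add[OF lD, of "x - Q x" "y - Q y"] by metis
      show "s (inverse t) (D (x + y - Q (x + y))) + D (Q (x + y)) =
        s (inverse t) (D (x - Q x)) + D (Q x) + (s (inverse t) (D (y - Q y)) + D (Q y))"
        unfolding h using lin_add[OF lD, of "Q x" "Q y"] lin_add[OF lQ]
        by (simp add: V.scale_right_distrib algebra_simps)
    next
      fix c x
      have "s c x - Q (s c x) = s c (x - Q x)" using lin_scale[OF lQ] by (simp add: V.scale_right_diff_distrib)
      then show "s (inverse t) (D (s c x - Q (s c x))) + D (Q (s c x)) =
        s c (s (inverse t) (D (x - Q x)) + D (Q x))"
        using lin_scale[OF lD] lin_scale[OF lQ] by (simp add: V.scale_right_distrib mult.commute)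
    qed
    have "phi D (mu X Y) = mu (phi D X) Y" for X Y
    proof -
      have z: "mu (D (Q X)) Y = 0" using key3[OF L D t0 t1] QinG unfolding G_def by blast
      have "phi D (mu X Y) = D (mu X Y)" unfolding phi_def using QG[OF brG] lin_zero[OF lD] by simp
      also have "\<dots> = s (inverse t) (mu (D X) Y)" using eD[of X Y, symmetric] t0 by simp
      also have "\<dots> = s (inverse t) (mu (D (X - Q X)) Y)"
        using lin_diff[OF lD] lin_diff[OF l2] z by simp
      also have "\<dots> = mu (phi D X) Y" unfolding phi_def
        using lin_add[OF l2] lin_scale[OF l2] z by simp
      finally show ?thesis .
    qed
    then show ?thesis using linphi by (simp add: centroid_def Dt10_def)
  qed
  have inj: "inj_on phi (Dt10 s mu t)"
  proof (rule inj_onI)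
    fix D1 D2 assume D1: "D1 \<in> Dt10 s mu t" and D2: "D2 \<in> Dt10 s mu t" and eq: "phi D1 = phi D2"
    have rec: "D x = s t (phi D x - phi D (Q x)) + phi D (Q x)" if D: "D \<in> Dt10 s mu t" for D x
    proof -
      have lD: "Vector_Spaces.linear s s D" using D by (simp add: Dt10_def)
      have pq: "phi D (Q x) = D (Q x)" unfolding phi_def using QG[OF QinG] lin_zero[OF lD] by simp
      moreover have "phi D x - D (Q x) = s (inverse t) (D (x - Q x))" unfolding phi_def by simp
      ultimately have "s t (phi D x - phi D (Q x)) = D (x - Q x)" using t0 by simp
      then show ?thesis using lin_diff[OF lD, of x "Q x"] pq by simp
    qed
    show "D1 = D2"
    proof
      fix x show "D1 x = D2 x" using rec[OF D1, of x] rec[OF D2, of x] eq by simp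
    qed
  qed
  show ?thesis using lin inj cent by blast
qed

end
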